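(* Fix $\theta=\pi/8$ and, for an angle $\alpha$, let $\phi_\alpha=\cos(\alpha)|0\rangle+\sin(\alpha)|1\rangle$. Define the single-qubit states $\phi_{0,0}=\phi_{-\theta}$, $\phi_{0,1}=\phi_{\theta}$, $\phi_{1,0}=\phi_{\pi/2-\theta}$, $\phi_{1,1}=\phi_{\pi/2+\theta}$. Consider the following two-party quantum protocol (the "biased coin flipping protocol"): (1) Alice picks $b,x\in\{0,1\}$ uniformly at random and sends the qubit $\phi_{b,x}$ to Bob. (2) Bob picks $b'\in\{0,1\}$ uniformly at random and sends it to Alice. (3) Alice sends $b$ and $x$ to Bob. Bob checks them against the qubit received in step (1) by measuring it in the orthonormal basis $\{\phi_{0,x},\phi_{1,x}\}$ and verifying that the outcome is $\phi_{b,x}$. The result of the game is $err$ if the check fails (Alice is caught cheating) and $b\oplus b'$ otherwise. Then this protocol is a quantum coin flipping protocol with bias $\delta\le 0.42$.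
   Context: A quantum coin flipping protocol with bias $\delta$ is a quantum communication protocol between Alice and Bob at the end of which each decides on a value in $\{0,1,err\}$; let $c_A$ and $c_B$ denote Alice's and Bob's results. It is required that: (i) if both players are honest, then always $c_A=c_B$, $\Pr(c_A=err)=0$ and $\Pr(c_A=0)=\Pr(c_A=1)=1/2$; (ii) if one player is honest and the other follows an arbitrary (all-powerful quantum) strategy, then the honest player's result $c$ satisfies $\Pr(c=b)\le \tfrac12+\delta$ for every $b\in\{0,1\}$. Classical bits sent as qubits are measured by the receiver in the computational basis $\{|0\rangle,|1\rangle\}$. *)

theory Defs
  imports Complex_Main
begin

(* Bits are represented by bool (False = 0, True = 1); XOR b \<oplus> b' is (b \<noteq> b'). *)

datatype outcome = Bit bool | Err

definition theta :: real where
  "theta = pi / 8"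

definition phi_ang :: "real \<Rightarrow> bool \<Rightarrow> complex" where
  "phi_ang \<alpha> q = (if q then complex_of_real (sin \<alpha>) else complex_of_real (cos \<alpha>))"

definition angle :: "bool \<Rightarrow> bool \<Rightarrow> real" where
  "angle b x = (if \<not> b \<and> \<not> x then - theta
               else if \<not> b \<and> x then theta
               else if b \<and> \<not> x then pi/2 - theta
               else pi/2 + theta)"

definition phi :: "bool \<Rightarrow> bool \<Rightarrow> bool \<Rightarrow> complex" where
  "phi b x = phi_ang (angle b x)"

definition braket :: "('n::finite \<Rightarrow> complex) \<Rightarrow> ('n \<Rightarrow> complex) \<Rightarrow> complex" where
  "braket u v = (\<Sum>i\<in>UNIV. cnj (u i) * v i)"

definition proj :: "('n \<Rightarrow> complex) \<Rightarrow> 'n \<Rightarrow> 'n \<Rightarrow> complex" where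
  "proj u i j = u i * cnj (u j)"

definition psd :: "('n::finite \<Rightarrow> 'n \<Rightarrow> complex) \<Rightarrow> bool" where
  "psd A \<longleftrightarrow> (\<forall>v::'n \<Rightarrow> complex.
      let q = (\<Sum>i\<in>UNIV. \<Sum>j\<in>UNIV. cnj (v i) * A i j * v j) in Im q = 0 \<and> Re q \<ge> 0)"

definition density :: "('n::finite \<Rightarrow> 'n \<Rightarrow> complex) \<Rightarrow> bool" where
  "density \<rho> \<longleftrightarrow> psd \<rho> \<and> (\<Sum>i\<in>UNIV. \<rho> i i) = 1"

definition povm :: "('o::finite \<Rightarrow> 'n::finite \<Rightarrow> 'n \<Rightarrow> complex) \<Rightarrow> bool" where
  "povm M \<longleftrightarrow> (\<forall>k. psd (M k)) \<and>
     (\<forall>i j. (\<Sum>k\<in>UNIV. M k i j) = (if i = j then 1 else 0))"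

definition tensor :: "('a \<Rightarrow> 'a \<Rightarrow> complex) \<Rightarrow> ('b \<Rightarrow> 'b \<Rightarrow> complex)
    \<Rightarrow> ('a \<times> 'b) \<Rightarrow> ('a \<times> 'b) \<Rightarrow> complex" where
  "tensor A B = (\<lambda>(i, k) (j, l). A i j * B k l)"

definition trace_prod :: "('n::finite \<Rightarrow> 'n \<Rightarrow> complex) \<Rightarrow> ('n \<Rightarrow> 'n \<Rightarrow> complex) \<Rightarrow> complex" where
  "trace_prod A B = (\<Sum>i\<in>UNIV. \<Sum>j\<in>UNIV. A i j * B j i)"

(* Honest execution: joint distribution of (c_A, c_B).  b, x, b' uniform;
   Bob measures phi_{b,x} in basis {phi_{0,x}, phi_{1,x}}, obtains phi_{b'',x}
   with probability |<phi_{b'',x}|phi_{b,x}>|^2; check passes iff b'' = b. *)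
definition honest_joint :: "outcome \<Rightarrow> outcome \<Rightarrow> real" where
  "honest_joint cA cB =
     (\<Sum>b\<in>UNIV. \<Sum>x\<in>UNIV. \<Sum>b'\<in>UNIV. \<Sum>b''\<in>UNIV.
        (1/8) * (cmod (braket (phi b'' x) (phi b x)))\<^sup>2 *
        (if cA = Bit (b \<noteq> b') \<and> cB = (if b'' = b then Bit (b \<noteq> b') else Err) then 1 else 0))"

definition honest_A :: "outcome \<Rightarrow> real" where
  "honest_A c = (\<Sum>c'\<in>{Bit False, Bit True, Err}. honest_joint c c')"

(* Alice's most general strategy: an arbitrary
   joint state rho on (sent qubit) \<otimes> C^'d (her private system, any finite dimension),
   and, for each received b', a POVM M b' on C^'d with outcome (b,x) that she sends.
   Bob measures the qubit in {phi_{0,x}, phi_{1,x}}; result Bit (b xor b') if the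
   outcome is phi_{b,x}, Err otherwise. *)
definition cheatA_dist :: "((bool \<times> 'd::finite) \<Rightarrow> (bool \<times> 'd) \<Rightarrow> complex)
    \<Rightarrow> (bool \<Rightarrow> bool \<times> bool \<Rightarrow> 'd \<Rightarrow> 'd \<Rightarrow> complex) \<Rightarrow> outcome \<Rightarrow> real" where
  "cheatA_dist \<rho> M c =
     (\<Sum>b'\<in>UNIV. \<Sum>b\<in>UNIV. \<Sum>x\<in>UNIV. \<Sum>b''\<in>UNIV.
        (1/2) * Re (trace_prod (tensor (proj (phi b'' x)) (M b' (b, x))) \<rho>) *
        (if c = (if b'' = b then Bit (b \<noteq> b') else Err) then 1 else 0))"

(* Cheating Bob with honest Alice.  Bob's most general strategy: a two-outcome
   POVM N on the received qubit, whose outcome b' he sends; Alice outputs b xor b'. *)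
definition cheatB_dist :: "(bool \<Rightarrow> bool \<Rightarrow> bool \<Rightarrow> complex) \<Rightarrow> outcome \<Rightarrow> real" where
  "cheatB_dist N c =
     (\<Sum>b\<in>UNIV. \<Sum>x\<in>UNIV. \<Sum>b'\<in>UNIV.
        (1/4) * Re (trace_prod (N b') (proj (phi b x))) *
        (if c = Bit (b \<noteq> b') then 1 else 0))"

end

theory Submission
  imports Defs
begin


definition quad :: "('n::finite \<Rightarrow> 'n \<Rightarrow> complex) \<Rightarrow> ('n \<Rightarrow> complex) \<Rightarrow> complex" where
  "quad A v = (\<Sum>i\<in>UNIV. \<Sum>j\<in>UNIV. cnj (v i) * A i j * v j)"

lemma psd_quad: "psd A \<longleftrightarrow> (\<forall>v. Im (quad A v) = 0 \<and> Re (quad A v) \<ge> 0)"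
  unfolding psd_def quad_def Let_def by simp

lemma quad_delta:
  fixes A :: "'n::finite \<Rightarrow> 'n \<Rightarrow> complex"
  shows "quad A (\<lambda>k. v k + (if k = p then t else 0)) =
    quad A v + cnj t * (\<Sum>j\<in>UNIV. A p j * v j) + t * (\<Sum>i\<in>UNIV. cnj (v i) * A i p) + cnj t * A p p * t"
proof -
  have e: "cnj (v i + (if i = p then t else 0)) * A i j * (v j + (if j = p then t else 0)) =
     cnj (v i) * A i j * v j + (if j = p then cnj (v i) * A i p * t else 0)
     + (if i = p then cnj t * A p j * v j else 0) + (if i = p \<and> j = p then cnj t * A p p * t else 0)" for i j
    by (auto simp: algebra_simps)
  have s1: "(\<Sum>i\<in>UNIV. \<Sum>j\<in>UNIV. (if j = p then cnj (v i) * A i p * t else (0::complex))) = t * (\<Sum>i\<in>UNIV. cnj (v i) * A i p)"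
    by (simp add: sum_distrib_left mult.commute mult.left_commute)
  have s2: "(\<Sum>i\<in>UNIV. \<Sum>j\<in>UNIV. (if i = p then cnj t * A p j * v j else (0::complex))) = cnj t * (\<Sum>j\<in>UNIV. A p j * v j)"
  proof -
    have "(\<Sum>i\<in>UNIV. \<Sum>j\<in>UNIV. (if i = p then cnj t * A p j * v j else (0::complex)))
       = (\<Sum>i\<in>UNIV. if i = p then (\<Sum>j\<in>UNIV. cnj t * A p j * v j) else 0)"
      by (rule sum.cong) auto
    also have "\<dots> = cnj t * (\<Sum>j\<in>UNIV. A p j * v j)" by (simp add: sum_distrib_left mult.assoc)
    finally show ?thesis .
  qed
  have s3: "(\<Sum>i\<in>UNIV. \<Sum>j\<in>UNIV. (if i = p \<and> j = p then cnj t * A p p * t else (0::complex))) = cnj t * A p p * t"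
  proof -
    have "(\<Sum>i\<in>UNIV. \<Sum>j\<in>UNIV. (if i = p \<and> j = p then cnj t * A p p * t else (0::complex)))
       = (\<Sum>i\<in>UNIV. if i = p then (\<Sum>j\<in>UNIV. if j = p then cnj t * A p p * t else 0) else 0)"
      by (rule sum.cong) auto
    then show ?thesis by simp
  qed
  show ?thesis
    unfolding quad_def e sum.distrib s1 s2 s3 by simp
qed

lemma quad_one: "quad A (\<lambda>k. if k = i then x else 0) = cnj x * A i i * x"
  using quad_delta[of A "\<lambda>_. 0" i x] by (simp add: quad_def)

lemma quad_two:
  assumes "i \<noteq> j"
  shows "quad A (\<lambda>k. (if k = i then x else 0) + (if k = j then y else 0)) =
     cnj x * A i i * x + cnj y * A j i * x + y * cnj x * A i j + cnj y * A j j * y"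
proof -
  have b: "(\<Sum>k\<in>UNIV. cnj (if k = i then x else 0) * A k j) = cnj x * A i j"
  proof -
    have "(\<Sum>k\<in>UNIV. cnj (if k = i then x else 0) * A k j) = (\<Sum>k\<in>UNIV. if k = i then cnj x * A i j else 0)"
      by (rule sum.cong) auto
    then show ?thesis by simp
  qed
  have a': "(\<Sum>k\<in>UNIV. A j k * (if k = i then x else 0)) = (\<Sum>k\<in>UNIV. if k = i then A j i * x else 0)"
      by (rule sum.cong) auto
  show ?thesis
    using quad_delta[of A "\<lambda>k. if k = i then x else 0" j y] assms
    unfolding a' b quad_one by (simp add: algebra_simps)
qed

lemma psd_diag: "psd A \<Longrightarrow> Im (A i i) = 0 \<and> Re (A i i) \<ge> 0"
  using quad_one[of A i 1] unfolding psd_quad by (metis complex_cnj_one mult_1 mult_1_right)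

lemma psd_herm:
  assumes "psd A" shows "A j i = cnj (A i j)"
proof (cases "i = j")
  case True then show ?thesis using psd_diag[OF assms, of i] by (simp add: complex_eq_iff)
next
  case False
  have 1: "Im (quad A (\<lambda>k. (if k = i then 1 else 0) + (if k = j then 1 else 0))) = 0"
    using assms unfolding psd_quad by blast
  have 2: "Im (quad A (\<lambda>k. (if k = i then 1 else 0) + (if k = j then \<i> else 0))) = 0"
    using assms unfolding psd_quad by blast
  have d1: "Im (A i i) = 0" "Im (A j j) = 0" using psd_diag[OF assms] by auto
  from 1 2 d1 show ?thesis unfolding quad_two[OF False]
    by (simp add: complex_eq_iff)
qed

lemma psd_decomp_aux:
  fixes A :: "'n::finite \<Rightarrow> 'n \<Rightarrow> complex"
  assumes "finite S" "psd A" "\<forall>i j. i \<notin> S \<or> j \<notin> S \<longrightarrow> A i j = 0"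
  shows "\<exists>(W::nat \<Rightarrow> 'n \<Rightarrow> complex) (m::nat). \<forall>i j. A i j = (\<Sum>k<m. W k i * cnj (W k j))"
using assms proof (induction S arbitrary: A rule: finite_induct)
  case empty
  then have "A i j = 0" for i j by auto
  then show ?case by (intro exI[of _ "\<lambda>_ _. 0"] exI[of _ 0]) simp
next
  case (insert p S)
  have herm: "\<And>i j. A j i = cnj (A i j)" using psd_herm[OF insert.prems(1)] .
  have dp: "Im (A p p) = 0" "Re (A p p) \<ge> 0" using psd_diag[OF insert.prems(1)] by auto
  show ?case
  proof (cases "A p p = 0")
    case True
    have row: "A p j = 0" for j
    proof (cases "j = p")
      case True then show ?thesis using \<open>A p p = 0\<close> by simp
    next
      case False
      have pj: "p \<noteq> j" using False by simp
      define z where "z = A p j"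
      define r where "r = (Re (A j j) + 1) / (2 * ((Re z)\<^sup>2 + (Im z)\<^sup>2))"
      show ?thesis
      proof (rule ccontr)
        assume "A p j \<noteq> 0"
        then have nz: "(Re z)\<^sup>2 + (Im z)\<^sup>2 > 0" unfolding z_def
          by (simp add: complex_eq_iff sum_power2_gt_zero_iff)
        have "Re (quad A (\<lambda>k. (if k = p then - of_real r * z else 0) + (if k = j then 1 else 0))) \<ge> 0"
          using insert.prems(1) unfolding psd_quad by blast
        moreover have "A j p = cnj z" unfolding z_def by (rule herm)
        ultimately have "Re (A j j) - 2 * r * ((Re z)\<^sup>2 + (Im z)\<^sup>2) \<ge> 0"
          unfolding quad_two[OF pj] using \<open>A p p = 0\<close> z_def
          by (simp add: algebra_simps power2_eq_square)
        moreover have "2 * r * ((Re z)\<^sup>2 + (Im z)\<^sup>2) = Re (A j j) + 1"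
          unfolding r_def using nz by (simp add: field_simps)
        ultimately show False by simp
      qed
    qed
    have supp: "\<forall>i j. i \<notin> S \<or> j \<notin> S \<longrightarrow> A i j = 0"
    proof (intro allI impI)
      fix i j assume "i \<notin> S \<or> j \<notin> S"
      then show "A i j = 0"
        using row herm[of p i] insert.prems(2) by (cases "i = p"; cases "j = p") auto
    qed
    show ?thesis using insert.IH[OF insert.prems(1) supp] .
  next
    case False
    define \<alpha> where "\<alpha> = Re (A p p)"
    have Ap: "A p p = of_real \<alpha>" using dp by (simp add: \<alpha>_def complex_eq_iff)
    have "\<alpha> \<ge> 0" using dp unfolding \<alpha>_def by simp
    moreover have "\<alpha> \<noteq> 0" using False Ap by auto
    ultimately have apos: "\<alpha> > 0" by simp
    define A' where "A' i j = A i j - A i p * cnj (A j p) / of_real \<alpha>" for i j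
    have hp: "A p j = cnj (A j p)" for j by (rule herm)
    have psd': "psd A'"
      unfolding psd_quad
    proof
      fix v
      define s where "s = (\<Sum>i\<in>UNIV. cnj (v i) * A i p)"
      define t where "t = - cnj s / of_real \<alpha>"
      have cs: "(\<Sum>j\<in>UNIV. A p j * v j) = cnj s" unfolding s_def
        by (simp only: cnj_sum) (rule sum.cong, simp_all add: hp)
      have "quad A' v = quad A v - (\<Sum>i\<in>UNIV. \<Sum>j\<in>UNIV. (cnj (v i) * A i p) * (cnj (A j p) * v j)) / of_real \<alpha>"
      proof -
        have "quad A' v = (\<Sum>i\<in>UNIV. \<Sum>j\<in>UNIV. cnj (v i) * A i j * v j - (cnj (v i) * A i p) * (cnj (A j p) * v j) / of_real \<alpha>)"
          unfolding quad_def A'_def by (intro sum.cong refl) (simp add: algebra_simps)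
        also have "\<dots> = quad A v - (\<Sum>i\<in>UNIV. \<Sum>j\<in>UNIV. (cnj (v i) * A i p) * (cnj (A j p) * v j)) / of_real \<alpha>"
          unfolding quad_def by (simp only: sum_subtractf sum_divide_distrib)
        finally show ?thesis .
      qed
      also have "\<dots> = quad A v - s * cnj s / of_real \<alpha>"
        unfolding s_def cnj_sum sum_product by (intro arg_cong2[where f="(-)"] refl arg_cong2[where f="(/)"] sum.cong) simp_all
      also have "\<dots> = quad A (\<lambda>k. v k + (if k = p then t else 0))"
        unfolding quad_delta cs Ap t_def s_def[symmetric] using apos
        by (simp add: field_simps)
      finally show "Im (quad A' v) = 0 \<and> Re (quad A' v) \<ge> 0"
        using insert.prems(1) unfolding psd_quad by simp
    qed
    have supp': "\<forall>i j. i \<notin> S \<or> j \<notin> S \<longrightarrow> A' i j = 0"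
    proof (intro allI impI)
      fix i j assume ij: "i \<notin> S \<or> j \<notin> S"
      show "A' i j = 0"
      proof (cases "i = p")
        case True then show ?thesis unfolding A'_def using apos Ap hp[of j] by simp
      next
        case F1: False
        show ?thesis
        proof (cases "j = p")
          case True then show ?thesis unfolding A'_def using apos Ap by simp
        next
          case False
          then show ?thesis unfolding A'_def using F1 ij insert.prems(2) by auto
        qed
      qed
    qed
    obtain W :: "nat \<Rightarrow> 'n \<Rightarrow> complex" and m :: nat where W: "\<forall>i j. A' i j = (\<Sum>k<m. W k i * cnj (W k j))"
      using insert.IH[OF psd' supp'] by blast
    define W' where "W' k = (if k < m then W k else (\<lambda>i. A i p / of_real (sqrt \<alpha>)))" for k
    show ?thesis
    proof (intro exI[of _ W'] exI[of _ "Suc m"] allI)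
      fix i j
      have "A i j = A' i j + A i p * cnj (A j p) / of_real \<alpha>" unfolding A'_def by simp
      also have "\<dots> = (\<Sum>k<m. W' k i * cnj (W' k j)) + W' m i * cnj (W' m j)"
      proof -
        have "(\<Sum>k<m. W' k i * cnj (W' k j)) = A' i j" using W by (simp add: W'_def)
        moreover have "W' m i * cnj (W' m j) = A i p * cnj (A j p) / of_real \<alpha>"
        proof -
          have "of_real (sqrt \<alpha>) * of_real (sqrt \<alpha>) = (of_real \<alpha> :: complex)"
            using apos using apos by (simp flip: of_real_mult)
          then show ?thesis using apos by (simp add: W'_def)
        qed
        ultimately show ?thesis by simp
      qed
      also have "\<dots> = (\<Sum>k<Suc m. W' k i * cnj (W' k j))" by simp
      finally show "A i j = (\<Sum>k<Suc m. W' k i * cnj (W' k j))" .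
    qed
  qed
qed

lemma psd_decomp:
  fixes A :: "'n::finite \<Rightarrow> 'n \<Rightarrow> complex"
  assumes "psd A"
  shows "\<exists>(W::nat \<Rightarrow> 'n \<Rightarrow> complex) (m::nat). \<forall>i j. A i j = (\<Sum>k<m. W k i * cnj (W k j))"
  using psd_decomp_aux[of UNIV A] assms by simp



lemma psd_rank:
  fixes A :: "'n::finite \<Rightarrow> 'n \<Rightarrow> complex" and W :: "'k \<Rightarrow> 'n \<Rightarrow> complex"
  assumes "finite I" "\<And>i j. A i j = (\<Sum>k\<in>I. W k i * cnj (W k j))"
  shows "psd A"
proof -
  have "quad A v = (\<Sum>k\<in>I. of_real ((cmod (\<Sum>i\<in>UNIV. cnj (v i) * W k i))\<^sup>2))" for v
  proof -
    have "quad A v = (\<Sum>i\<in>UNIV. \<Sum>j\<in>UNIV. \<Sum>k\<in>I. (cnj (v i) * W k i) * cnj (cnj (v j) * W k j))"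
      unfolding quad_def assms(2) by (simp add: sum_distrib_left sum_distrib_right mult_ac)
    also have "\<dots> = (\<Sum>i\<in>UNIV. \<Sum>k\<in>I. \<Sum>j\<in>UNIV. (cnj (v i) * W k i) * cnj (cnj (v j) * W k j))"
      by (rule sum.cong[OF refl], rule sum.swap)
    also have "\<dots> = (\<Sum>k\<in>I. \<Sum>i\<in>UNIV. \<Sum>j\<in>UNIV. (cnj (v i) * W k i) * cnj (cnj (v j) * W k j))"
      by (rule sum.swap)
    also have "\<dots> = (\<Sum>k\<in>I. (\<Sum>i\<in>UNIV. cnj (v i) * W k i) * cnj (\<Sum>j\<in>UNIV. cnj (v j) * W k j))"
      by (simp add: cnj_sum sum_product)
    also have "\<dots> = (\<Sum>k\<in>I. of_real ((cmod (\<Sum>i\<in>UNIV. cnj (v i) * W k i))\<^sup>2))"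
      by (simp only: complex_norm_square)
    finally show ?thesis .
  qed
  then show ?thesis unfolding psd_quad by (simp add: sum_nonneg)
qed

lemma trace_psd:
  fixes A B :: "'n::finite \<Rightarrow> 'n \<Rightarrow> complex"
  assumes "psd A" "psd B"
  shows "Re (trace_prod A B) \<ge> 0"
proof -
  obtain W :: "nat \<Rightarrow> 'n \<Rightarrow> complex" and m where W: "\<And>i j. A i j = (\<Sum>k<m. W k i * cnj (W k j))"
    using psd_decomp[OF assms(1)] by blast
  have "trace_prod A B = (\<Sum>i\<in>UNIV. \<Sum>j\<in>UNIV. \<Sum>k<m. cnj (W k j) * B j i * W k i)"
    unfolding trace_prod_def W by (simp add: sum_distrib_left sum_distrib_right mult_ac)
  also have "\<dots> = (\<Sum>i\<in>UNIV. \<Sum>k<m. \<Sum>j\<in>UNIV. cnj (W k j) * B j i * W k i)"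
    by (rule sum.cong[OF refl], rule sum.swap)
  also have "\<dots> = (\<Sum>k<m. \<Sum>i\<in>UNIV. \<Sum>j\<in>UNIV. cnj (W k j) * B j i * W k i)"
    by (rule sum.swap)
  also have "\<dots> = (\<Sum>k<m. quad B (W k))"
    unfolding quad_def by (rule sum.cong[OF refl], rule sum.swap)
  finally have "Re (trace_prod A B) = (\<Sum>k<m. Re (quad B (W k)))" by simp
  also have "\<dots> \<ge> 0" using assms(2) unfolding psd_quad by (simp add: sum_nonneg)
  finally show ?thesis .
qed

lemma tensor_apply: "tensor A B x y = A (fst x) (fst y) * B (snd x) (snd y)"
  unfolding tensor_def by (simp add: case_prod_beta)

lemma tensor_psd:
  fixes A :: "'a::finite \<Rightarrow> 'a \<Rightarrow> complex" and B :: "'b::finite \<Rightarrow> 'b \<Rightarrow> complex"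
  assumes "psd A" "psd B"
  shows "psd (tensor A B)"
proof -
  obtain W :: "nat \<Rightarrow> 'a \<Rightarrow> complex" and m where W: "\<And>i j. A i j = (\<Sum>k<m. W k i * cnj (W k j))"
    using psd_decomp[OF assms(1)] by blast
  obtain Z :: "nat \<Rightarrow> 'b \<Rightarrow> complex" and n where Z: "\<And>i j. B i j = (\<Sum>k<n. Z k i * cnj (Z k j))"
    using psd_decomp[OF assms(2)] by blast
  show ?thesis
  proof (rule psd_rank[where I = "{..<m} \<times> {..<n}" and W = "\<lambda>(a,b) x. W a (fst x) * Z b (snd x)"])
    fix x y :: "'a \<times> 'b"
    show "tensor A B x y = (\<Sum>k\<in>{..<m} \<times> {..<n}. (case k of (a, b) \<Rightarrow> \<lambda>x. W a (fst x) * Z b (snd x)) x *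
             cnj ((case k of (a, b) \<Rightarrow> \<lambda>x. W a (fst x) * Z b (snd x)) y))"
      unfolding tensor_apply W Z sum_product sum.cartesian_product
      by (rule sum.cong[OF refl]) (auto simp: mult_ac)
  qed simp
qed



definition cs :: real where "cs = cos theta"
definition sn :: real where "sn = sin theta"

lemma cs_nonneg: "cs \<ge> 0" unfolding cs_def theta_def by (rule cos_ge_zero) (use pi_gt_zero in auto)
lemma sn_nonneg: "sn \<ge> 0" unfolding sn_def theta_def by (rule sin_ge_zero) (use pi_gt_zero in auto)
lemma cs_sn_sq: "cs\<^sup>2 + sn\<^sup>2 = 1" unfolding cs_def sn_def by simp
lemma two_k: "2 * sn * cs = sqrt 2 / 2"
proof -
  have "2 * sn * cs = sin (2 * theta)" unfolding sn_def cs_def sin_double by simp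
  also have "2 * theta = pi / 4" unfolding theta_def by simp
  finally show ?thesis using sin_45 by simp
qed
lemma cs_sq_diff: "cs\<^sup>2 - sn\<^sup>2 = sqrt 2 / 2"
proof -
  have "cs\<^sup>2 - sn\<^sup>2 = cos (2 * theta)" unfolding sn_def cs_def cos_double by simp
  also have "2 * theta = pi / 4" unfolding theta_def by simp
  finally show ?thesis using cos_45 by simp
qed
lemma sqrt2_le: "sqrt 2 \<le> 3/2" by (rule real_le_lsqrt) (auto simp: power2_eq_square)

lemma phi_vals:
  "phi False False = (\<lambda>q. if q then complex_of_real (- sn) else complex_of_real cs)"
  "phi False True = (\<lambda>q. if q then complex_of_real sn else complex_of_real cs)"
  "phi True False = (\<lambda>q. if q then complex_of_real cs else complex_of_real sn)"
  "phi True True = (\<lambda>q. if q then complex_of_real cs else complex_of_real (- sn))"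
  unfolding phi_def phi_ang_def angle_def cs_def sn_def
  by (auto simp: cos_diff sin_diff cos_add sin_add)



lemma cs_sn_c: "complex_of_real cs * complex_of_real cs + complex_of_real sn * complex_of_real sn = 1"
  using cs_sn_sq by (simp flip: of_real_mult of_real_add add: power2_eq_square)

lemma braket_phi: "(cmod (braket (phi b'' x) (phi b x)))\<^sup>2 = (if b'' = b then 1 else 0)"
  by (cases b''; cases b; cases x) (simp_all add: braket_def phi_vals UNIV_bool cs_sn_c algebra_simps)

lemma honest_part: "(\<forall>cA cB. cA \<noteq> cB \<longrightarrow> honest_joint cA cB = 0)
       \<and> honest_A Err = 0 \<and> honest_A (Bit False) = 1/2 \<and> honest_A (Bit True) = 1/2"
  unfolding honest_A_def honest_joint_def by (auto simp: UNIV_bool braket_phi)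



lemma psd_proj: "psd (proj u)"
  by (rule psd_rank[where I = "{()}" and W = "\<lambda>_. u"]) (simp_all add: proj_def)

definition gam :: real where "gam = sqrt (2 * (cs\<^sup>2 - sn\<^sup>2))"

definition G :: "bool \<Rightarrow> bool \<Rightarrow> bool \<Rightarrow> complex" where
  "G b = proj (\<lambda>i. if i = b then 0 else complex_of_real gam)"

lemma gg: "complex_of_real gam * complex_of_real gam = 2 * (complex_of_real cs * complex_of_real cs) - 2 * (complex_of_real sn * complex_of_real sn)"
proof -
  have nn: "2 * (cs\<^sup>2 - sn\<^sup>2) \<ge> 0" unfolding cs_sq_diff by simp
  have "gam * gam = 2 * (cs * cs) - 2 * (sn * sn)" unfolding gam_def using nn by (simp add: power2_eq_square)
  then have "complex_of_real (gam * gam) = complex_of_real (2 * (cs * cs) - 2 * (sn * sn))" by simp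
  then show ?thesis by simp
qed

lemma PG: "proj (phi b False) i j + proj (phi b True) i j + G b i j = (if i = j then complex_of_real (2 * cs\<^sup>2) else 0)"
  by (cases b; cases i; cases j) (simp_all add: proj_def phi_vals G_def gg power2_eq_square algebra_simps)

lemma tr_add3: "trace_prod K (\<lambda>i j. A i j + B i j + C i j) = trace_prod K A + trace_prod K B + trace_prod K C"
  unfolding trace_prod_def by (simp add: distrib_left sum.distrib)

lemma tr_delta: "trace_prod K (\<lambda>i j. if i = j then c else 0) = c * (\<Sum>i\<in>UNIV. K i i)"
  unfolding trace_prod_def by (simp add: sum_distrib_left mult.commute if_distrib[where f="\<lambda>z. _ * z"] cong: if_cong)

lemma bob_b:
  assumes "psd K"
  shows "Re (trace_prod K (proj (phi b False))) + Re (trace_prod K (proj (phi b True))) \<le> 2 * cs\<^sup>2 * Re (\<Sum>i\<in>UNIV. K i i)"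
proof -
  have "trace_prod K (\<lambda>i j. proj (phi b False) i j + proj (phi b True) i j + G b i j) = complex_of_real (2 * cs\<^sup>2) * (\<Sum>i\<in>UNIV. K i i)"
    unfolding PG tr_delta ..
  then have "Re (trace_prod K (proj (phi b False))) + Re (trace_prod K (proj (phi b True))) + Re (trace_prod K (G b)) = 2 * cs\<^sup>2 * Re (\<Sum>i\<in>UNIV. K i i)"
    unfolding tr_add3 by (metis Re_complex_of_real plus_complex.sel(1) times_complex.sel(1) mult_zero_left diff_zero Im_complex_of_real)
  moreover have "Re (trace_prod K (G b)) \<ge> 0" using trace_psd[OF assms] psd_proj G_def by metis
  ultimately show ?thesis by linarith
qed

lemma cs_sq: "cs\<^sup>2 = (1 + sqrt 2 / 2) / 2"
proof -
  have "2 * cs\<^sup>2 = 1 + sqrt 2 / 2" using cs_sn_sq cs_sq_diff by linarith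
  then show ?thesis by simp
qed

lemma bob_part:
  assumes "povm N"
  shows "cheatB_dist N (Bit c) \<le> 1/2 + 42/100"
proof -
  have psdN: "psd (N b)" for b using assms unfolding povm_def by blast
  have tr1: "N False i i + N True i i = 1" for i using assms unfolding povm_def by (simp add: UNIV_bool)
  have "cheatB_dist N (Bit c) = 1/4 * ((Re (trace_prod (N False) (proj (phi c False))) + Re (trace_prod (N False) (proj (phi c True))))
      + (Re (trace_prod (N True) (proj (phi (\<not>c) False))) + Re (trace_prod (N True) (proj (phi (\<not>c) True)))))"
    unfolding cheatB_dist_def by (cases c) (simp_all add: UNIV_bool)
  also have "\<dots> \<le> 1/4 * (2 * cs\<^sup>2 * Re (\<Sum>i\<in>UNIV. N False i i) + 2 * cs\<^sup>2 * Re (\<Sum>i\<in>UNIV. N True i i))"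
    using bob_b[OF psdN[of False], of c] bob_b[OF psdN[of True], of "\<not>c"] by simp
  also have "\<dots> = 1/4 * 2 * cs\<^sup>2 * Re (\<Sum>i\<in>UNIV. N False i i + N True i i)"
    by (simp add: sum.distrib algebra_simps)
  also have "\<dots> = cs\<^sup>2" unfolding tr1 by (simp add: UNIV_bool)
  also have "\<dots> \<le> 1/2 + 42/100" unfolding cs_sq using sqrt2_le by simp
  finally show ?thesis .
qed



lemma quad_add: "quad (\<lambda>i j. A i j + B i j) v = quad A v + quad B v"
  unfolding quad_def by (simp add: distrib_left distrib_right sum.distrib)

lemma psd_add: "psd A \<Longrightarrow> psd B \<Longrightarrow> psd (\<lambda>i j. A i j + B i j)"
  unfolding psd_quad quad_add by simp

lemma tp_add1: "trace_prod (tensor (\<lambda>i j. A i j + B i j) K) \<rho> = trace_prod (tensor A K) \<rho> + trace_prod (tensor B K) \<rho>"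
  unfolding trace_prod_def tensor_apply by (simp add: distrib_right sum.distrib)

lemma tp_add1': "trace_prod (tensor (\<lambda>i j. A i j + B i j) K) \<rho> = trace_prod (tensor A K) \<rho> + trace_prod (tensor B K) \<rho>"
  by (rule tp_add1)

lemma tp_sumK:
  fixes K :: "'r \<Rightarrow> 'b::finite \<Rightarrow> 'b \<Rightarrow> complex" and A :: "'a::finite \<Rightarrow> 'a \<Rightarrow> complex"
  shows "trace_prod (tensor A (\<lambda>k l. \<Sum>r\<in>Os. K r k l)) \<rho> = (\<Sum>r\<in>Os. trace_prod (tensor A (K r)) \<rho>)"
proof -
  have "trace_prod (tensor A (\<lambda>k l. \<Sum>r\<in>Os. K r k l)) \<rho> = (\<Sum>x\<in>UNIV. \<Sum>y\<in>UNIV. \<Sum>r\<in>Os. A (fst x) (fst y) * K r (snd x) (snd y) * \<rho> y x)"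
    unfolding trace_prod_def tensor_apply by (simp add: sum_distrib_left sum_distrib_right)
  also have "\<dots> = (\<Sum>x\<in>UNIV. \<Sum>r\<in>Os. \<Sum>y\<in>UNIV. A (fst x) (fst y) * K r (snd x) (snd y) * \<rho> y x)"
    by (rule sum.cong[OF refl], rule sum.swap)
  also have "\<dots> = (\<Sum>r\<in>Os. \<Sum>x\<in>UNIV. \<Sum>y\<in>UNIV. A (fst x) (fst y) * K r (snd x) (snd y) * \<rho> y x)"
    by (rule sum.swap)
  also have "\<dots> = (\<Sum>r\<in>Os. trace_prod (tensor A (K r)) \<rho>)"
    unfolding trace_prod_def tensor_apply ..
  finally show ?thesis .
qed

lemma tp_delta:
  "trace_prod (tensor (\<lambda>i j. if i = j then c else 0) (\<lambda>k l. if k = l then 1 else 0)) \<rho> = c * (\<Sum>x\<in>UNIV. \<rho> x x)"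
proof -
  have "tensor (\<lambda>i j. if i = j then c else 0) (\<lambda>k l. if k = l then 1 else 0) x y = (if x = y then c else 0)" for x y :: "'a \<times> 'b"
    unfolding tensor_apply by (auto simp: prod_eq_iff)
  then show ?thesis unfolding trace_prod_def
    by (simp add: sum_distrib_left if_distrib[where f="\<lambda>z. z * _"] cong: if_cong)
qed

definition kk :: real where "kk = sn * cs"
definition sk :: real where "sk = sqrt kk"

lemma sksk: "complex_of_real sk * complex_of_real sk = complex_of_real sn * complex_of_real cs"
proof -
  have "kk \<ge> 0" unfolding kk_def using sn_nonneg cs_nonneg by simp
  then have "sk * sk = sn * cs" unfolding sk_def kk_def[symmetric] by simp
  then have "complex_of_real (sk * sk) = complex_of_real (sn * cs)" by simp
  then show ?thesis by simp
qed

definition Bm :: "bool \<Rightarrow> bool \<Rightarrow> bool \<Rightarrow> complex" where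
  "Bm b i j = (if i = j then complex_of_real (if i = b then cs\<^sup>2 + kk else sn\<^sup>2 + kk) else 0)"

definition D :: "bool \<Rightarrow> bool \<Rightarrow> bool \<Rightarrow> bool \<Rightarrow> complex" where
  "D b x = proj (\<lambda>i. if i then complex_of_real (sk * (if b = x then 1 else -1)) else complex_of_real sk)"

lemma PD: "proj (phi b x) i j + D b x i j = Bm b i j"
  by (cases b; cases x; cases i; cases j) (simp_all add: proj_def phi_vals D_def Bm_def kk_def sksk power2_eq_square algebra_simps)

lemma Bm_eq: "Bm b = (\<lambda>i j. proj (phi b x) i j + D b x i j)"
  using PD by auto

lemma psd_Bm: "psd (Bm b)"
  unfolding Bm_eq[of b False] by (rule psd_add) (simp_all add: psd_proj D_def)

lemma Bm_sum: "(\<lambda>i j. Bm False i j + Bm True i j) = (\<lambda>i j. if i = j then complex_of_real (1 + sqrt 2 / 2) else 0)"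
proof -
  have "cs\<^sup>2 + kk + (sn\<^sup>2 + kk) = 1 + sqrt 2 / 2" using cs_sn_sq two_k unfolding kk_def by linarith
  then show ?thesis by (auto simp: Bm_def fun_eq_iff simp flip: of_real_add)
qed

lemma sum_bb: "(\<Sum>r\<in>(UNIV :: (bool \<times> bool) set). f r) = f (False, False) + f (False, True) + f (True, False) + f (True, True)"
proof -
  have "(UNIV :: (bool \<times> bool) set) = {(False, False), (False, True), (True, False), (True, True)}" (is "_ = ?U") by auto
  note U = this
  have "(\<Sum>r\<in>(UNIV :: (bool \<times> bool) set). f r) = (\<Sum>r\<in>?U. f r)" by (simp only: U)
  then show ?thesis by (simp add: add_ac)
qed



lemma alice_b:
  fixes \<rho> :: "(bool \<times> 'd::finite) \<Rightarrow> (bool \<times> 'd) \<Rightarrow> complex"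
    and Mb :: "bool \<times> bool \<Rightarrow> 'd \<Rightarrow> 'd \<Rightarrow> complex"
  assumes rho: "psd \<rho>" and pv: "povm Mb"
  shows "Re (trace_prod (tensor (proj (phi b False)) (Mb (b, False))) \<rho>)
       + Re (trace_prod (tensor (proj (phi b True)) (Mb (b, True))) \<rho>)
       \<le> Re (trace_prod (tensor (Bm b) (\<lambda>k l. if k = l then 1 else 0)) \<rho>)"
proof -
  have psdM: "psd (Mb r)" for r using pv unfolding povm_def by blast
  have step1: "Re (trace_prod (tensor (proj (phi b x)) K) \<rho>) \<le> Re (trace_prod (tensor (Bm b) K) \<rho>)"
    if K: "psd K" for x K
  proof -
    have "trace_prod (tensor (Bm b) K) \<rho> = trace_prod (tensor (proj (phi b x)) K) \<rho> + trace_prod (tensor (D b x) K) \<rho>"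
      unfolding Bm_eq[of b x] by (rule tp_add1)
    moreover have "Re (trace_prod (tensor (D b x) K) \<rho>) \<ge> 0"
      by (rule trace_psd[OF tensor_psd[OF _ K] rho]) (simp add: D_def psd_proj)
    ultimately show ?thesis by simp
  qed
  have nn: "Re (trace_prod (tensor (Bm b) (Mb r)) \<rho>) \<ge> 0" for r
    by (rule trace_psd[OF tensor_psd[OF psd_Bm psdM] rho])
  have idm: "(\<lambda>k l. \<Sum>r\<in>UNIV. Mb r k l) = (\<lambda>k l. if k = l then 1 else 0)"
    using pv unfolding povm_def by auto
  have "Re (trace_prod (tensor (Bm b) (\<lambda>k l. if k = l then 1 else 0)) \<rho>) = (\<Sum>r\<in>UNIV. Re (trace_prod (tensor (Bm b) (Mb r)) \<rho>))"
    unfolding idm[symmetric] tp_sumK by simp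
  also have "\<dots> = Re (trace_prod (tensor (Bm b) (Mb (False, False))) \<rho>) + Re (trace_prod (tensor (Bm b) (Mb (False, True))) \<rho>)
      + Re (trace_prod (tensor (Bm b) (Mb (True, False))) \<rho>) + Re (trace_prod (tensor (Bm b) (Mb (True, True))) \<rho>)"
    by (rule sum_bb)
  finally have eq: "Re (trace_prod (tensor (Bm b) (\<lambda>k l. if k = l then 1 else 0)) \<rho>) = \<dots>" .
  show ?thesis
    using step1[OF psdM, of False "(b, False)"] step1[OF psdM, of True "(b, True)"]
      nn[of "(False, False)"] nn[of "(False, True)"] nn[of "(True, False)"] nn[of "(True, True)"]
    unfolding eq by (cases b) simp_all
qed

lemma alice_part:
  fixes \<rho> :: "(bool \<times> 'd::finite) \<Rightarrow> (bool \<times> 'd) \<Rightarrow> complex"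
    and M :: "bool \<Rightarrow> bool \<times> bool \<Rightarrow> 'd \<Rightarrow> 'd \<Rightarrow> complex"
  assumes "density \<rho>" "\<forall>b'. povm (M b')"
  shows "cheatA_dist \<rho> M (Bit c) \<le> 1/2 + 42/100"
proof -
  have rho: "psd \<rho>" and tr: "(\<Sum>x\<in>UNIV. \<rho> x x) = 1" using assms(1) unfolding density_def by auto
  let ?I = "(\<lambda>k l. if k = l then 1 else 0) :: 'd \<Rightarrow> 'd \<Rightarrow> complex"
  have "cheatA_dist \<rho> M (Bit c) = 1/2 * ((Re (trace_prod (tensor (proj (phi c False)) (M False (c, False))) \<rho>)
       + Re (trace_prod (tensor (proj (phi c True)) (M False (c, True))) \<rho>))
     + (Re (trace_prod (tensor (proj (phi (\<not>c) False)) (M True (\<not>c, False))) \<rho>)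
       + Re (trace_prod (tensor (proj (phi (\<not>c) True)) (M True (\<not>c, True))) \<rho>)))"
    unfolding cheatA_dist_def by (cases c) (simp_all add: UNIV_bool algebra_simps)
  also have "\<dots> \<le> 1/2 * (Re (trace_prod (tensor (Bm c) ?I) \<rho>) + Re (trace_prod (tensor (Bm (\<not>c)) ?I) \<rho>))"
    using alice_b[OF rho, of "M False" c] alice_b[OF rho, of "M True" "\<not>c"] assms(2) by simp
  also have "\<dots> = 1/2 * Re (trace_prod (tensor (\<lambda>i j. Bm False i j + Bm True i j) ?I) \<rho>)"
    unfolding tp_add1 by (cases c) simp_all
  also have "\<dots> = 1/2 * (1 + sqrt 2 / 2)"
    unfolding Bm_sum tp_delta tr by simp
  also have "\<dots> \<le> 1/2 + 42/100" using sqrt2_le by simp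
  finally show ?thesis .
qed


theorem theorem2:
  fixes \<rho> :: "(bool \<times> 'd::finite) \<Rightarrow> (bool \<times> 'd) \<Rightarrow> complex"
    and M :: "bool \<Rightarrow> bool \<times> bool \<Rightarrow> 'd \<Rightarrow> 'd \<Rightarrow> complex"
    and N :: "bool \<Rightarrow> bool \<Rightarrow> bool \<Rightarrow> complex"
  defines "\<delta> \<equiv> (42 / 100 :: real)"
  shows "(\<forall>cA cB. cA \<noteq> cB \<longrightarrow> honest_joint cA cB = 0)
       \<and> honest_A Err = 0 \<and> honest_A (Bit False) = 1/2 \<and> honest_A (Bit True) = 1/2
       \<and> (density \<rho> \<and> (\<forall>b'. povm (M b')) \<longrightarrow>
            (\<forall>b. cheatA_dist \<rho> M (Bit b) \<le> 1/2 + \<delta>))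
       \<and> (povm N \<longrightarrow> (\<forall>b. cheatB_dist N (Bit b) \<le> 1/2 + \<delta>))"
  using honest_part alice_part[of \<rho> M] bob_part[of N] unfolding \<delta>_def by blast

end
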